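(* Let $\mathcal G$ be a strongly connected directed graph with no self loops, vertex set $\mathcal V=\{1,\dots,n\}$ and edge set $\mathcal E=\{1,\dots,m\}$. Let $B=S-D$ be its incidence matrix, let $Q=DB^\mathsf{T}$, and let $W$ and $Q^\ddagger$ be as in the context. Let $\omega^{\mathrm u}\in\mathbb{R}^n$ be constant. Consider the dynamics \[ \dot{\tilde\theta}(t)=\omega^{\mathrm u}+c(t),\qquad \tilde\beta(t)=B^\mathsf{T}\tilde\theta(t),\qquad y(t)=D\tilde\beta(t). \] Let $\mathcal T$ be an outward directed spanning tree with root $r$, and let $g_1,\dots,g_{n-1}$ be an ordering of its edges such that $g_a\prec g_b$ implies $a<b$. Let $k,k_2>0$. Let $0<t_1<\dots<t_n$ satisfy $t_{j+1}-t_j>|\tilde\beta_{g_j}(t_j)|/k_2$ for each $j$. For each $i\neq r$, let $j(i)$ be the unique index with $\mathrm{dst}(g_{j(i)})=i$. Let the control be \[ c_i(t)=\begin{cases} k\,y_i(t) & t<t_1,\\ k\,y_i(t_1)+k_2\,\mathrm{sign}\big(\tilde\beta_{g_{j(i)}}(t)\big) & i\neq r,\ t_{j(i)}\le t<t_{j(i)+1},\\ k\,y_i(t_1) & \text{otherwise.}\end{cases} \] Assume \[ \tilde\beta(t_1)=-k^{-1}B^\mathsf{T}Q^\ddagger\omega^{\mathrm u} \qquad\text{and}\qquad \omega^{\mathrm u}+k\,y(t_1)=W\omega^{\mathrm u}. \] Then $\tilde\beta_a(t_n)=0$ for every edge $a\in\mathcal T$.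
   Context: The matrices $S,D\in\mathbb{R}^{n\times m}$ are defined by $S_{ie}=1$ if node $i$ is the source of edge $e$ and $0$ otherwise, and $D_{ie}=1$ if node $i$ is the destination of edge $e$ and $0$ otherwise. The vector $\mathbf{1}$ is the all-ones vector. The matrix $Q=DB^\mathsf{T}$ is an irreducible rate matrix. Let $z>0$ satisfy $z^\mathsf{T}Q=0$ and $\mathbf{1}^\mathsf{T}z=1$, and set $W=\mathbf{1}z^\mathsf{T}$. Write $Q=T\begin{bmatrix}0&0\\0&\Lambda\end{bmatrix}T^{-1}$, where $T$ is invertible with first column $\mathbf{1}$, the first row of $T^{-1}$ is $z^\mathsf{T}$, and $\Lambda$ is invertible. Define $Q^\ddagger=T\begin{bmatrix}0&0\\0&\Lambda^{-1}\end{bmatrix}T^{-1}$. An outward directed spanning tree with root $r$ is a set $\mathcal T$ of $n-1$ edges such that every vertex is reachable from $r$ by a directed path in $\mathcal T$, and each vertex other than $r$ is the destination of exactly one edge of $\mathcal T$. For $f,g\in\mathcal T$, $f\prec g$ means there is a directed walk of nonzero length in $\mathcal T$ from $\mathrm{dst}(f)$ to $\mathrm{dst}(g)$. The convention $\mathrm{sign}(0)=0$ is used. *)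

theory Defs
  imports Complex_Main "Jordan_Normal_Form.Matrix"
begin

text \<open>Vertices are 0..n-1 and edges are 0..m-1 (0-based indices, matching Jordan_Normal_Form).
  An edge e goes from src e to dst e.\<close>

definition edge_rel :: "nat \<Rightarrow> (nat \<Rightarrow> nat) \<Rightarrow> (nat \<Rightarrow> nat) \<Rightarrow> nat set \<Rightarrow> (nat \<times> nat) set" where
  "edge_rel m src dst A = {(src e, dst e) | e. e \<in> A \<and> e < m}"

definition digraph_ok :: "nat \<Rightarrow> nat \<Rightarrow> (nat \<Rightarrow> nat) \<Rightarrow> (nat \<Rightarrow> nat) \<Rightarrow> bool" where
  "digraph_ok n m src dst \<longleftrightarrow> (\<forall>e<m. src e < n \<and> dst e < n \<and> src e \<noteq> dst e)"

definition strongly_connected :: "nat \<Rightarrow> nat \<Rightarrow> (nat \<Rightarrow> nat) \<Rightarrow> (nat \<Rightarrow> nat) \<Rightarrow> bool" where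
  "strongly_connected n m src dst \<longleftrightarrow>
     (\<forall>u<n. \<forall>v<n. (u, v) \<in> (edge_rel m src dst UNIV)\<^sup>*)"

definition S_mat :: "nat \<Rightarrow> nat \<Rightarrow> (nat \<Rightarrow> nat) \<Rightarrow> real mat" where
  "S_mat n m src = mat n m (\<lambda>(i, e). if src e = i then 1 else 0)"

definition D_mat :: "nat \<Rightarrow> nat \<Rightarrow> (nat \<Rightarrow> nat) \<Rightarrow> real mat" where
  "D_mat n m dst = mat n m (\<lambda>(i, e). if dst e = i then 1 else 0)"

definition B_mat :: "nat \<Rightarrow> nat \<Rightarrow> (nat \<Rightarrow> nat) \<Rightarrow> (nat \<Rightarrow> nat) \<Rightarrow> real mat" where
  "B_mat n m src dst = S_mat n m src - D_mat n m dst"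

definition Q_mat :: "nat \<Rightarrow> nat \<Rightarrow> (nat \<Rightarrow> nat) \<Rightarrow> (nat \<Rightarrow> nat) \<Rightarrow> real mat" where
  "Q_mat n m src dst = D_mat n m dst * transpose_mat (B_mat n m src dst)"

definition W_mat :: "nat \<Rightarrow> real vec \<Rightarrow> real mat" where
  "W_mat n z = mat n n (\<lambda>(i, j). z $ j)"

definition is_Qddag :: "nat \<Rightarrow> real mat \<Rightarrow> real vec \<Rightarrow> real mat \<Rightarrow> bool" where
  "is_Qddag n Q z Qd \<longleftrightarrow>
    (\<exists>T Ti L Li.
       T \<in> carrier_mat n n \<and> Ti \<in> carrier_mat n n \<and>
       inverts_mat T Ti \<and> inverts_mat Ti T \<and>
       col T 0 = vec n (\<lambda>_. 1) \<and> row Ti 0 = z \<and>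
       L \<in> carrier_mat (n - 1) (n - 1) \<and> Li \<in> carrier_mat (n - 1) (n - 1) \<and>
       inverts_mat L Li \<and> inverts_mat Li L \<and>
       Q = T * four_block_mat (0\<^sub>m 1 1) (0\<^sub>m 1 (n - 1)) (0\<^sub>m (n - 1) 1) L * Ti \<and>
       Qd = T * four_block_mat (0\<^sub>m 1 1) (0\<^sub>m 1 (n - 1)) (0\<^sub>m (n - 1) 1) Li * Ti)"

definition out_spanning_tree ::
  "nat \<Rightarrow> nat \<Rightarrow> (nat \<Rightarrow> nat) \<Rightarrow> (nat \<Rightarrow> nat) \<Rightarrow> nat set \<Rightarrow> nat \<Rightarrow> bool" where
  "out_spanning_tree n m src dst Tr r \<longleftrightarrow>
     Tr \<subseteq> {..<m} \<and> card Tr = n - 1 \<and> r < n \<and>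
     (\<forall>v<n. (r, v) \<in> (edge_rel m src dst Tr)\<^sup>*) \<and>
     (\<forall>v<n. v \<noteq> r \<longrightarrow> (\<exists>!e. e \<in> Tr \<and> dst e = v))"

definition tree_prec ::
  "nat \<Rightarrow> (nat \<Rightarrow> nat) \<Rightarrow> (nat \<Rightarrow> nat) \<Rightarrow> nat set \<Rightarrow> nat \<Rightarrow> nat \<Rightarrow> bool" where
  "tree_prec m src dst Tr f g \<longleftrightarrow> (dst f, dst g) \<in> (edge_rel m src dst Tr)\<^sup>+"

end

theory Submission
  imports Defs
begin

lemma mono_fin_aux:
  fixes f f' :: "real \<Rightarrow> real"
  shows "finite S \<Longrightarrow> card (S \<inter> {a<..<b}) = N \<Longrightarrow> a \<le> b \<Longrightarrow> continuous_on {a..b} f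
    \<Longrightarrow> (\<And>x. x \<in> {a<..<b} - S \<Longrightarrow> (f has_real_derivative f' x) (at x))
    \<Longrightarrow> (\<And>x. x \<in> {a<..<b} - S \<Longrightarrow> f' x \<le> 0) \<Longrightarrow> f b \<le> f a"
proof (induction N arbitrary: a b rule: less_induct)
  case (less N)
  show ?case
  proof (cases "S \<inter> {a<..<b} = {}")
    case True
    show ?thesis
      apply (rule DERIV_nonpos_imp_decreasing_open[OF less.prems(3) _ less.prems(4)])
      subgoal for x
      proof -
        assume x: "a < x" "x < b"
        then have "x \<notin> S" using True by auto
        then show ?thesis using x less.prems(5,6)[of x] by auto
      qed
      done
  next
    case False
    then obtain c where c: "c \<in> S" "a < c" "c < b" by auto
    have sub1: "S \<inter> {a<..<c} \<subset> S \<inter> {a<..<b}" using c by auto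
    have sub2: "S \<inter> {c<..<b} \<subset> S \<inter> {a<..<b}" using c by auto
    have fin: "finite (S \<inter> {a<..<b})" using less.prems(1) by simp
    have "f c \<le> f a"
      apply (rule less.IH[OF _ less.prems(1) refl])
      using psubset_card_mono[OF fin sub1] less.prems c
      by (auto intro: continuous_on_subset)
    moreover have "f b \<le> f c"
      apply (rule less.IH[OF _ less.prems(1) refl])
      using psubset_card_mono[OF fin sub2] less.prems c
      by (auto intro: continuous_on_subset)
    ultimately show ?thesis by simp
  qed
qed

lemma mono_fin:
  fixes f f' :: "real \<Rightarrow> real"
  assumes "finite S" "a \<le> b" "continuous_on {a..b} f"
    and "\<And>x. x \<in> {a<..<b} - S \<Longrightarrow> (f has_real_derivative f' x) (at x)"
    and "\<And>x. x \<in> {a<..<b} - S \<Longrightarrow> f' x \<le> 0"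
  shows "f b \<le> f a"
  using mono_fin_aux[OF assms(1) refl assms(2-)] by blast

lemma const_fin:
  fixes f :: "real \<Rightarrow> real"
  assumes S: "finite S" and ab: "a \<le> b" and c: "continuous_on {a..b} f"
    and d: "\<And>x. x \<in> {a<..<b} - S \<Longrightarrow> (f has_real_derivative 0) (at x)"
  shows "f b = f a"
proof -
  have "f b \<le> f a" by (rule mono_fin[OF S ab c d]) auto
  moreover have "(\<lambda>x. - f x) b \<le> (\<lambda>x. - f x) a"
  proof (rule mono_fin[OF S ab, where f'="\<lambda>_. 0"])
    show "continuous_on {a..b} (\<lambda>x. - f x)" using c by (auto intro!: continuous_intros)
    fix x assume "x \<in> {a<..<b} - S"
    from d[OF this] show "((\<lambda>x. - f x) has_real_derivative 0) (at x)"
      using DERIV_minus by fastforce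
  qed auto
  ultimately show ?thesis by simp
qed

lemma sign_conv:
  fixes f :: "real \<Rightarrow> real"
  assumes S: "finite S" and ab: "a \<le> b" and cont: "continuous_on {a..b} f" and K: "K > 0"
    and der: "\<And>x. x \<in> {a<..<b} - S \<Longrightarrow> (f has_real_derivative (- K * sgn (f x))) (at x)"
    and gap: "\<bar>f a\<bar> < K * (b - a)"
  shows "f b = 0"
proof -
  have stay: "f b = 0" if s0: "s0 \<in> {a..b}" "f s0 = 0" for s0
  proof -
    have "(\<lambda>x. f x * f x) b \<le> (\<lambda>x. f x * f x) s0"
    proof (rule mono_fin[OF S, where a=s0 and b=b and f="\<lambda>x. f x * f x" and f' = "\<lambda>x. 2 * f x * (- K * sgn (f x))"])
      show "s0 \<le> b" using s0 by auto
      show "continuous_on {s0..b} (\<lambda>x. f x * f x)" using cont s0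
        by (auto intro!: continuous_intros intro: continuous_on_subset)
      fix x assume x: "x \<in> {s0<..<b} - S"
      hence "x \<in> {a<..<b} - S" using s0 by auto
      from DERIV_mult[OF der[OF this] der[OF this]]
      show "((\<lambda>x. f x * f x) has_real_derivative 2 * f x * (- K * sgn (f x))) (at x)"
        by (simp add: algebra_simps)
      have e2: "2 * f x * (- K * sgn (f x)) = - (2 * K * \<bar>f x\<bar>)" by (simp add: abs_sgn algebra_simps)
      show "2 * f x * (- K * sgn (f x)) \<le> 0" unfolding e2 using K by simp
    qed
    then show ?thesis using s0 by (auto simp: mult_le_0_iff)
  qed
  show ?thesis
  proof (rule ccontr)
    assume nz: "f b \<noteq> 0"
    have nz_all: "f s \<noteq> 0" if "s \<in> {a..b}" for s using stay that nz by blast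
    consider "f a > 0" | "f a < 0" using nz_all[of a] ab by force
    then show False
    proof cases
      case 1
      have pos: "f s > 0" if s: "s \<in> {a..b}" for s
      proof (rule ccontr)
        assume "\<not> f s > 0"
        then have "f s \<le> 0" by simp
        moreover have "continuous_on {a..s} f" using cont s by (auto intro: continuous_on_subset)
        ultimately obtain x where "a \<le> x" "x \<le> s" "f x = 0"
          using IVT2'[of f s 0 a] 1 s by auto
        then show False using nz_all s by auto
      qed
      define h where "h x = f x + K * x" for x
      have hd: "(h has_real_derivative 0) (at x)" if "x \<in> {a<..<b} - S" for x
      proof -
        have "(f has_real_derivative (-K)) (at x)" using der[OF that] pos[of x] that by auto
        then show ?thesis unfolding h_def by (auto intro!: derivative_eq_intros)
      qed
      have hc: "continuous_on {a..b} h" unfolding h_def using cont by (auto intro!: continuous_intros)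
      have "h b = h a" by (rule const_fin[OF S ab hc hd])
      hence "f b = f a - K*(b-a)" unfolding h_def by (simp add: algebra_simps)
      then show False using gap 1 pos[of b] ab by auto
    next
      case 2
      have neg: "f s < 0" if s: "s \<in> {a..b}" for s
      proof (rule ccontr)
        assume "\<not> f s < 0"
        then have "f s \<ge> 0" by simp
        moreover have "continuous_on {a..s} f" using cont s by (auto intro: continuous_on_subset)
        ultimately obtain x where "a \<le> x" "x \<le> s" "f x = 0"
          using IVT'[of f a 0 s] 2 s by auto
        then show False using nz_all s by auto
      qed
      define h where "h x = f x - K * x" for x
      have hd: "(h has_real_derivative 0) (at x)" if "x \<in> {a<..<b} - S" for x
      proof -
        have "(f has_real_derivative K) (at x)" using der[OF that] neg[of x] that by auto
        then show ?thesis unfolding h_def by (auto intro!: derivative_eq_intros)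
      qed
      have hc: "continuous_on {a..b} h" unfolding h_def using cont by (auto intro!: continuous_intros)
      have "h b = h a" by (rule const_fin[OF S ab hc hd])
      hence "f b = f a + K*(b-a)" unfolding h_def by (simp add: algebra_simps)
      then show False using gap 2 neg[of b] ab by auto
    qed
  qed
qed

lemma t_le:
  fixes t :: "nat \<Rightarrow> real"
  assumes "\<forall>j\<in>{1..<n}. t j < t (Suc j)"
  shows "1 \<le> i \<Longrightarrow> i \<le> i' \<Longrightarrow> i' \<le> n \<Longrightarrow> t i \<le> t i'"
proof (induction i')
  case 0 then show ?case by simp
next
  case (Suc i')
  show ?case
  proof (cases "i \<le> i'")
    case True
    then have "t i \<le> t i'" using Suc by simp
    also have "t i' < t (Suc i')" using assms Suc True by auto
    finally show ?thesis by simp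
  next
    case False
    then show ?thesis using Suc by (simp add: le_Suc_eq)
  qed
qed

theorem lemma4:
  fixes n m :: nat and src dst :: "nat \<Rightarrow> nat"
    and z \<omega> :: "real vec" and Qd :: "real mat"
    and \<theta> :: "real \<Rightarrow> real vec" and c :: "real \<Rightarrow> nat \<Rightarrow> real"
    and Tr :: "nat set" and r :: nat and g :: "nat \<Rightarrow> nat"
    and k k2 :: real and t :: "nat \<Rightarrow> real" and X :: "real set"
  assumes graph: "digraph_ok n m src dst"
    and sc: "strongly_connected n m src dst"
    and z_dim: "z \<in> carrier_vec n"
    and z_pos: "\<forall>i<n. z $ i > 0"
    and z_left: "transpose_mat (Q_mat n m src dst) *\<^sub>v z = 0\<^sub>v n"
    and z_sum: "vec n (\<lambda>_. 1) \<bullet> z = 1"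
    and Qd: "is_Qddag n (Q_mat n m src dst) z Qd"
    and \<omega>_dim: "\<omega> \<in> carrier_vec n"
    and \<theta>_dim: "\<forall>s\<ge>0. \<theta> s \<in> carrier_vec n"
    and \<theta>_cont: "\<forall>i<n. continuous_on {0..} (\<lambda>s. \<theta> s $ i)"
    and X_fin: "finite X"
    and dyn: "\<forall>s. s > 0 \<and> s \<notin> X \<longrightarrow>
               (\<forall>i<n. ((\<lambda>u. \<theta> u $ i) has_real_derivative (\<omega> $ i + c s i)) (at s))"
    and tree: "out_spanning_tree n m src dst Tr r"
    and g_bij: "bij_betw g {1..n-1} Tr"
    and g_ord: "\<forall>a\<in>{1..n-1}. \<forall>b\<in>{1..n-1}.
                  tree_prec m src dst Tr (g a) (g b) \<longrightarrow> a < b"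
    and k_pos: "k > 0" and k2_pos: "k2 > 0"
    and t1_pos: "0 < t 1"
    and t_mono: "\<forall>j\<in>{1..<n}. t j < t (Suc j)"
    and t_gap: "\<forall>j\<in>{1..<n}. t (Suc j) - t j >
       \<bar>(transpose_mat (B_mat n m src dst) *\<^sub>v \<theta> (t j)) $ g j\<bar> / k2"
    and ctrl: "\<forall>s\<ge>0. \<forall>i<n. c s i =
       (let \<beta> = (\<lambda>u. transpose_mat (B_mat n m src dst) *\<^sub>v \<theta> u);
            y = (\<lambda>u. D_mat n m dst *\<^sub>v \<beta> u);
            J = (THE j. j \<in> {1..n-1} \<and> dst (g j) = i)
        in if s < t 1 then k * (y s $ i)
           else if i \<noteq> r \<and> t J \<le> s \<and> s < t (Suc J)
             then k * (y (t 1) $ i) + k2 * sgn (\<beta> s $ g J)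
           else k * (y (t 1) $ i))"
    and init_beta: "transpose_mat (B_mat n m src dst) *\<^sub>v \<theta> (t 1) =
       - (1 / k) \<cdot>\<^sub>v (transpose_mat (B_mat n m src dst) *\<^sub>v (Qd *\<^sub>v \<omega>))"
    and init_y: "\<omega> + k \<cdot>\<^sub>v (D_mat n m dst *\<^sub>v (transpose_mat (B_mat n m src dst) *\<^sub>v \<theta> (t 1)))
       = W_mat n z *\<^sub>v \<omega>"
  shows "\<forall>a\<in>Tr. (transpose_mat (B_mat n m src dst) *\<^sub>v \<theta> (t n)) $ a = 0"
proof -
  define Bt where "Bt = transpose_mat (B_mat n m src dst)"
  define \<beta> where "\<beta> u = Bt *\<^sub>v \<theta> u" for u
  have gm: "\<And>e. e < m \<Longrightarrow> src e < n \<and> dst e < n" using graph by (auto simp: digraph_ok_def)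
  have beta_eq: "\<beta> s $ e = \<theta> s $ src e - \<theta> s $ dst e" if e: "e < m" and s: "s \<ge> 0" for e s
  proof -
    have dimt: "dim_vec (\<theta> s) = n" using \<theta>_dim s by auto
    have "\<beta> s $ e = (\<Sum>i<n. ((if src e = i then 1 else 0) - (if dst e = i then 1 else 0)) * \<theta> s $ i)"
      using e dimt
      by (simp add: \<beta>_def Bt_def B_mat_def S_mat_def D_mat_def scalar_prod_def lessThan_atLeast0)
    also have "\<dots> = (\<Sum>i<n. (if src e = i then \<theta> s $ i else 0) - (if dst e = i then \<theta> s $ i else 0))"
      by (rule sum.cong) auto
    also have "\<dots> = (\<Sum>i<n. (if src e = i then \<theta> s $ i else 0)) - (\<Sum>i<n. (if dst e = i then \<theta> s $ i else 0))"
      by (rule sum_subtractf)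
    also have "\<dots> = \<theta> s $ src e - \<theta> s $ dst e" using gm[OF e] by (simp add: sum.delta)
    finally show ?thesis .
  qed
  define Cst where "Cst = (\<Sum>j<n. z $ j * \<omega> $ j)"
  have cst: "\<omega> $ i + k * ((D_mat n m dst *\<^sub>v \<beta> (t 1)) $ i) = Cst" if i: "i < n" for i
  proof -
    have "(\<omega> + k \<cdot>\<^sub>v (D_mat n m dst *\<^sub>v \<beta> (t 1))) $ i = (W_mat n z *\<^sub>v \<omega>) $ i"
      using init_y by (simp add: \<beta>_def Bt_def)
    then show ?thesis using i \<omega>_dim
      by (simp add: W_mat_def D_mat_def Cst_def scalar_prod_def lessThan_atLeast0)
  qed
  define Jf where "Jf v = (THE j. j \<in> {1..n-1} \<and> dst (g j) = v)" for v
  define \<sigma> where "\<sigma> v s = (if v \<noteq> r \<and> t (Jf v) \<le> s \<and> s < t (Suc (Jf v))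
      then k2 * sgn (\<beta> s $ g (Jf v)) else 0)" for v s
  have dth: "((\<lambda>u. \<theta> u $ v) has_real_derivative (Cst + \<sigma> v s)) (at s)"
    if v: "v < n" and s: "s \<ge> t 1" "s \<notin> X" for v s
  proof -
    have "s > 0" using s t1_pos by linarith
    then have "((\<lambda>u. \<theta> u $ v) has_real_derivative (\<omega> $ v + c s v)) (at s)" using dyn v s by blast
    moreover have "\<omega> $ v + c s v = Cst + \<sigma> v s"
      using ctrl[rule_format, of s v] \<open>s > 0\<close> s v cst[OF v]
      by (simp add: Let_def \<sigma>_def Jf_def \<beta>_def Bt_def algebra_simps)
    ultimately show ?thesis by simp
  qed
  have gTr: "g j \<in> Tr" if "j \<in> {1..n-1}" for j using g_bij that by (auto simp: bij_betw_def)
  have Trm: "Tr \<subseteq> {..<m}" and rn: "r < n"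
    and reach: "\<forall>v<n. (r, v) \<in> (edge_rel m src dst Tr)\<^sup>*"
    and uniq: "\<forall>v<n. v \<noteq> r \<longrightarrow> (\<exists>!e. e \<in> Tr \<and> dst e = v)"
    using tree by (auto simp: out_spanning_tree_def)
  have J_eq: "Jf v = j" if "v < n" "v \<noteq> r" "j \<in> {1..n-1}" "dst (g j) = v" for v j
    unfolding Jf_def
  proof (rule the_equality)
    show "j \<in> {1..n-1} \<and> dst (g j) = v" using that by simp
    fix j' assume j': "j' \<in> {1..n-1} \<and> dst (g j') = v"
    then have "g j' = g j" using uniq that gTr[of j] gTr[of j'] by blast
    then show "j' = j" using g_bij j' that by (auto simp: bij_betw_def inj_on_def)
  qed
  have tle: "t i \<le> t i'" if "1 \<le> i" "i \<le> i'" "i' \<le> n" for i i'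
    using t_le[OF t_mono] that by blast
  show ?thesis
  proof
    fix a assume aT: "a \<in> Tr"
    obtain j where j: "j \<in> {1..n-1}" "a = g j" using g_bij aT by (auto simp: bij_betw_def)
    have am: "a < m" using aT Trm by auto
    define p where "p = src a"
    define q where "q = dst a"
    have pn: "p < n" and qn: "q < n" using gm[OF am] by (auto simp: p_def q_def)
    have edge: "(p, q) \<in> edge_rel m src dst Tr" using aT am by (auto simp: edge_rel_def p_def q_def)
    have qr: "q \<noteq> r"
    proof
      assume "q = r"
      then have "(q, q) \<in> (edge_rel m src dst Tr)\<^sup>+" using reach pn edge
        by (meson rtrancl_into_trancl1)
      then have "tree_prec m src dst Tr (g j) (g j)" using j by (simp add: tree_prec_def q_def)
      then show False using g_ord j by blast
    qed
    have Jq: "Jf q = j" using J_eq[OF qn qr j(1)] j by (simp add: q_def)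
    have sp: "\<sigma> p s = 0" if "s \<ge> t j" for s
    proof (cases "p = r")
      case True then show ?thesis by (simp add: \<sigma>_def)
    next
      case False
      then obtain e where e: "e \<in> Tr" "dst e = p" using uniq pn by blast
      then obtain j' where j': "j' \<in> {1..n-1}" "e = g j'" using g_bij by (auto simp: bij_betw_def)
      have Jp: "Jf p = j'" using J_eq[OF pn False j'(1)] e j' by simp
      have "tree_prec m src dst Tr (g j') (g j)" using edge e j' j
        by (auto simp: tree_prec_def q_def)
      then have "j' < j" using g_ord j j' by blast
      then have "t (Suc j') \<le> t j" using tle[of "Suc j'" j] j j' by auto
      then show ?thesis using that Jp by (simp add: \<sigma>_def)
    qed
    define F where "F s = \<theta> s $ p - \<theta> s $ q" for s
    have t1j: "t 1 \<le> t j" using tle[of 1 j] j by auto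
    have tjs: "t j < t (Suc j)" using t_mono j by auto
    have tsn: "t (Suc j) \<le> t n" using tle[of "Suc j" n] j by auto
    have Fb: "F s = \<beta> s $ a" if "s \<ge> 0" for s using beta_eq[OF am that] by (simp add: F_def p_def q_def)
    have dF: "(F has_real_derivative (\<sigma> p s - \<sigma> q s)) (at s)" if "s \<ge> t 1" "s \<notin> X" for s
    proof -
      from DERIV_diff[OF dth[OF pn that] dth[OF qn that]]
      show ?thesis unfolding F_def by simp
    qed
    have Fc: "continuous_on {x..y} F" if "0 \<le> x" for x y
    proof -
      have "continuous_on {0..} F" unfolding F_def
        using \<theta>_cont pn qn by (auto intro!: continuous_intros)
      then show ?thesis by (rule continuous_on_subset) (use that in auto)
    qed
    have F1: "F (t (Suc j)) = 0"
    proof (rule sign_conv[OF X_fin _ Fc k2_pos])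
      show "t j \<le> t (Suc j)" using tjs by simp
      show "0 \<le> t j" using t1j t1_pos by simp
      fix x assume x: "x \<in> {t j<..<t (Suc j)} - X"
      have "\<sigma> q x = k2 * sgn (F x)" using x Jq qr Fb[of x] t1j t1_pos j
        by (simp add: \<sigma>_def)
      moreover have "\<sigma> p x = 0" using sp x by simp
      ultimately show "(F has_real_derivative - k2 * sgn (F x)) (at x)"
        using dF[of x] x t1j by simp
    next
      have "\<bar>\<beta> (t j) $ g j\<bar> / k2 < t (Suc j) - t j" using t_gap j
        by (auto simp: \<beta>_def Bt_def)
      then have "\<bar>\<beta> (t j) $ g j\<bar> < k2 * (t (Suc j) - t j)" using k2_pos
        by (simp add: divide_less_eq mult.commute)
      then show "\<bar>F (t j)\<bar> < k2 * (t (Suc j) - t j)" using Fb[of "t j"] t1j t1_pos j by simp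
    qed
    have "F (t n) = F (t (Suc j))"
    proof (rule const_fin[OF X_fin tsn])
      show "continuous_on {t (Suc j)..t n} F" using Fc t1j tjs t1_pos by simp
      fix x assume x: "x \<in> {t (Suc j)<..<t n} - X"
      have "\<sigma> q x = 0" using x Jq by (simp add: \<sigma>_def)
      moreover have "\<sigma> p x = 0" using sp x tjs by simp
      ultimately show "(F has_real_derivative 0) (at x)" using dF[of x] x t1j tjs by simp
    qed
    then have "F (t n) = 0" using F1 by simp
    moreover have "t n \<ge> 0" using t1j tjs tsn t1_pos by simp
    ultimately show "(transpose_mat (B_mat n m src dst) *\<^sub>v \<theta> (t n)) $ a = 0"
      using Fb by (simp add: \<beta>_def Bt_def)
  qed
qed

end
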